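(* In the setting below, let $A\in\Lambda^1(M,\mathfrak g)$, $B\in\Lambda^2(M,\mathfrak h)$, $C\in\Lambda^3(M,\mathfrak l)$, with curvatures $\Omega_1=dA+\tfrac12[A,A]-\alpha(B)$, $\Omega_2=dB+A\triangleright B-\beta(C)$, $\Omega_3=dC+A\triangleright C+\{B,B\}$, and let $\mathrm{CS}_5(A,B,C)=\langle 2F-\alpha(B),C\rangle_{\mathfrak g,\mathfrak l}+\langle B,\Omega_2\rangle_{\mathfrak h}-d\langle A,C\rangle_{\mathfrak g,\mathfrak l}$ with $F=dA+\tfrac12[A,A]$. Then $$d\,\mathrm{CS}_5(A,B,C)=2\langle\Omega_1,\Omega_3\rangle_{\mathfrak g,\mathfrak l}+\langle\Omega_2,\Omega_2\rangle_{\mathfrak h}.$$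
   Context: A differential 2-crossed module $(\mathfrak l,\mathfrak h,\mathfrak g;\beta,\alpha,\triangleright,\{\cdot,\cdot\})$: Lie homomorphisms $\mathfrak l\xrightarrow{\beta}\mathfrak h\xrightarrow{\alpha}\mathfrak g$ with $\alpha\circ\beta=0$, a $\mathfrak g$-action $\triangleright$ by derivations on $\mathfrak l,\mathfrak h$ and adjointly on $\mathfrak g$, with $\alpha,\beta$ equivariant, and a $\mathfrak g$-equivariant bilinear Peiffer lifting $\{\cdot,\cdot\}:\mathfrak h\times\mathfrak h\to\mathfrak l$ satisfying $\beta\{Y_1,Y_2\}=[Y_1,Y_2]-\alpha(Y_1)\triangleright Y_2$, $[Z_1,Z_2]=\{\beta Z_1,\beta Z_2\}$, $\{\beta(Z),Y\}+\{Y,\beta(Z)\}=-\alpha(Y)\triangleright Z$, and the remaining standard 2-crossed module axioms; it is the differential of a Lie 2-crossed module $L\to H\to G$. $G$-invariant pairings: an antisymmetric non-degenerate bilinear form $\langle-,-\rangle_{\mathfrak h}$ with $\langle[Y,Y_1],Y_2\rangle_{\mathfrak h}=-\langle Y_1,[Y,Y_2]\rangle_{\mathfrak h}$, $\langle Y,X\triangleright Y_1\rangle_{\mathfrak h}=\langle Y_1,X\triangleright Y\rangle_{\mathfrak h}$, $G$-invariant; and a non-singular bilinear form $\langle-,-\rangle_{\mathfrak g,\mathfrak l}:\mathfrak g\times\mathfrak l\to\mathbb R$ with $\langle[X_1,X_2],Z\rangle_{\mathfrak g,\mathfrak l}=-\langle X_2,X_1\triangleright Z\rangle_{\mathfrak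 g,\mathfrak l}$, $\langle\alpha(Y),Z\rangle_{\mathfrak g,\mathfrak l}=-\langle\beta(Z),Y\rangle_{\mathfrak h}$, $\langle X,\{Y_1,Y_2\}\rangle_{\mathfrak g,\mathfrak l}=\tfrac12\langle Y_2,X\triangleright Y_1\rangle_{\mathfrak h}$, $G$-invariant. On a smooth manifold $M$, all operations and pairings extend componentwise to Lie-algebra-valued forms (e.g. $\langle A,C\rangle_{\mathfrak g,\mathfrak l}=A^a\wedge C^b\langle X_a,Z_b\rangle$, $\langle B_1,B_2\rangle_{\mathfrak h}=B_1^a\wedge B_2^b\langle Y_a,Y_b\rangle$, $\{B_1,B_2\}=B_1^a\wedge B_2^b\otimes\{Y_a,Y_b\}$, $A\triangleright C=A^a\wedge C^b\otimes X_a\triangleright Z_b$). *)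

theory Defs
  imports "HOL-Analysis.Analysis"
begin

text \<open>The real forms Lambda(M) on a smooth manifold M, with exterior product wedge,
  exterior derivative d and homogeneous components hom k = Lambda^k(M).
  Only the structural properties of Lambda(M) are recorded.\<close>

definition forms_algebra ::
  "('w::real_vector \<Rightarrow> 'w \<Rightarrow> 'w) \<Rightarrow> ('w \<Rightarrow> 'w) \<Rightarrow> (nat \<Rightarrow> 'w set) \<Rightarrow> bool" where
  "forms_algebra wedge d hom \<longleftrightarrow>
     (\<forall>k. subspace (hom k)) \<and>
     bilinear wedge \<and> linear d \<and>
     (\<forall>a b c. wedge (wedge a b) c = wedge a (wedge b c)) \<and>
     (\<forall>p q a b. a \<in> hom p \<longrightarrow> b \<in> hom q \<longrightarrow> wedge a b \<in> hom (p + q)) \<and>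
     (\<forall>p q a b. a \<in> hom p \<longrightarrow> b \<in> hom q \<longrightarrow> wedge a b = (-1) ^ (p * q) *\<^sub>R wedge b a) \<and>
     (\<forall>p a. a \<in> hom p \<longrightarrow> d a \<in> hom (Suc p)) \<and>
     (\<forall>a. d (d a) = 0) \<and>
     (\<forall>p a b. a \<in> hom p \<longrightarrow> d (wedge a b) = wedge (d a) b + (-1) ^ p *\<^sub>R wedge a (d b))"

text \<open>Finite-dimensional real Lie algebras are represented on coordinate space real^'n
  (via a chosen basis axis i 1).\<close>

definition lie_algebra :: "('v::real_vector \<Rightarrow> 'v \<Rightarrow> 'v) \<Rightarrow> bool" where
  "lie_algebra br \<longleftrightarrow> bilinear br \<and> (\<forall>x. br x x = 0) \<and>
     (\<forall>x y z. br x (br y z) + br y (br z x) + br z (br x y) = 0)"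

definition lie_hom :: "('v::real_vector \<Rightarrow> 'v \<Rightarrow> 'v) \<Rightarrow> ('u::real_vector \<Rightarrow> 'u \<Rightarrow> 'u)
    \<Rightarrow> ('v \<Rightarrow> 'u) \<Rightarrow> bool" where
  "lie_hom brv bru f \<longleftrightarrow> linear f \<and> (\<forall>x y. f (brv x y) = bru (f x) (f y))"

definition lie_action_deriv :: "('g::real_vector \<Rightarrow> 'g \<Rightarrow> 'g) \<Rightarrow> ('v::real_vector \<Rightarrow> 'v \<Rightarrow> 'v)
    \<Rightarrow> ('g \<Rightarrow> 'v \<Rightarrow> 'v) \<Rightarrow> bool" where
  "lie_action_deriv brg brv act \<longleftrightarrow> bilinear act \<and>
     (\<forall>X1 X2 v. act (brg X1 X2) v = act X1 (act X2 v) - act X2 (act X1 v)) \<and>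
     (\<forall>X v w. act X (brv v w) = brv (act X v) w + brv v (act X w))"

definition diff_2crossed_module ::
  "('l::real_vector \<Rightarrow> 'l \<Rightarrow> 'l) \<Rightarrow> ('h::real_vector \<Rightarrow> 'h \<Rightarrow> 'h) \<Rightarrow> ('g::real_vector \<Rightarrow> 'g \<Rightarrow> 'g)
   \<Rightarrow> ('l \<Rightarrow> 'h) \<Rightarrow> ('h \<Rightarrow> 'g) \<Rightarrow> ('g \<Rightarrow> 'l \<Rightarrow> 'l) \<Rightarrow> ('g \<Rightarrow> 'h \<Rightarrow> 'h)
   \<Rightarrow> ('h \<Rightarrow> 'h \<Rightarrow> 'l) \<Rightarrow> bool" where
  "diff_2crossed_module brl brh brg \<beta> \<alpha> actl acth pf \<longleftrightarrow>
     lie_algebra brl \<and> lie_algebra brh \<and> lie_algebra brg \<and>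
     lie_hom brl brh \<beta> \<and> lie_hom brh brg \<alpha> \<and> (\<forall>Z. \<alpha> (\<beta> Z) = 0) \<and>
     lie_action_deriv brg brl actl \<and> lie_action_deriv brg brh acth \<and>
     (\<forall>X Y. \<alpha> (acth X Y) = brg X (\<alpha> Y)) \<and>
     (\<forall>X Z. \<beta> (actl X Z) = acth X (\<beta> Z)) \<and>
     bilinear pf \<and>
     (\<forall>X Y1 Y2. actl X (pf Y1 Y2) = pf (acth X Y1) Y2 + pf Y1 (acth X Y2)) \<and>
     (\<forall>Y1 Y2. \<beta> (pf Y1 Y2) = brh Y1 Y2 - acth (\<alpha> Y1) Y2) \<and>
     (\<forall>Z1 Z2. brl Z1 Z2 = pf (\<beta> Z1) (\<beta> Z2)) \<and>
     (\<forall>Y1 Y2 Y3. pf (brh Y1 Y2) Y3 =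
        actl (\<alpha> Y1) (pf Y2 Y3) + pf Y1 (brh Y2 Y3) - actl (\<alpha> Y2) (pf Y1 Y3) - pf Y2 (brh Y1 Y3)) \<and>
     (\<forall>Y1 Y2 Y3. pf Y1 (brh Y2 Y3) = pf (\<beta> (pf Y1 Y2)) Y3 - pf (\<beta> (pf Y1 Y3)) Y2) \<and>
     (\<forall>Z Y. pf (\<beta> Z) Y + pf Y (\<beta> Z) = - actl (\<alpha> Y) Z)"

definition invariant_pairings ::
  "('l::real_vector \<Rightarrow> 'l \<Rightarrow> 'l) \<Rightarrow> ('h::real_vector \<Rightarrow> 'h \<Rightarrow> 'h) \<Rightarrow> ('g::real_vector \<Rightarrow> 'g \<Rightarrow> 'g)
   \<Rightarrow> ('l \<Rightarrow> 'h) \<Rightarrow> ('h \<Rightarrow> 'g) \<Rightarrow> ('g \<Rightarrow> 'l \<Rightarrow> 'l) \<Rightarrow> ('g \<Rightarrow> 'h \<Rightarrow> 'h)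
   \<Rightarrow> ('h \<Rightarrow> 'h \<Rightarrow> 'l) \<Rightarrow> ('h \<Rightarrow> 'h \<Rightarrow> real) \<Rightarrow> ('g \<Rightarrow> 'l \<Rightarrow> real) \<Rightarrow> bool" where
  "invariant_pairings brl brh brg \<beta> \<alpha> actl acth pf ph pgl \<longleftrightarrow>
     bilinear ph \<and>
     (\<forall>Y1 Y2. ph Y1 Y2 = - ph Y2 Y1) \<and>
     (\<forall>Y1. (\<forall>Y2. ph Y1 Y2 = 0) \<longrightarrow> Y1 = 0) \<and>
     (\<forall>Y Y1 Y2. ph (brh Y Y1) Y2 = - ph Y1 (brh Y Y2)) \<and>
     (\<forall>X Y Y1. ph Y (acth X Y1) = ph Y1 (acth X Y)) \<and>
     (\<forall>X Y1 Y2. ph (acth X Y1) Y2 + ph Y1 (acth X Y2) = 0) \<and>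
     bilinear pgl \<and>
     (\<forall>X. (\<forall>Z. pgl X Z = 0) \<longrightarrow> X = 0) \<and>
     (\<forall>Z. (\<forall>X. pgl X Z = 0) \<longrightarrow> Z = 0) \<and>
     (\<forall>X1 X2 Z. pgl (brg X1 X2) Z = - pgl X2 (actl X1 Z)) \<and>
     (\<forall>Y Z. pgl (\<alpha> Y) Z = - ph (\<beta> Z) Y) \<and>
     (\<forall>X Y1 Y2. pgl X (pf Y1 Y2) = (1/2) * ph Y2 (acth X Y1))"

section \<open>Lie-algebra-valued forms (components w.r.t. the basis axis i 1)\<close>

definition vform :: "(nat \<Rightarrow> 'w set) \<Rightarrow> nat \<Rightarrow> ('a \<Rightarrow> 'w) \<Rightarrow> bool" where
  "vform hom k A \<longleftrightarrow> (\<forall>i. A i \<in> hom k)"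

definition dV :: "('w \<Rightarrow> 'w) \<Rightarrow> ('a \<Rightarrow> 'w) \<Rightarrow> ('a \<Rightarrow> 'w)" where
  "dV d A = (\<lambda>i. d (A i))"

definition ext1 :: "(real^'a \<Rightarrow> real^'b) \<Rightarrow> ('a::finite \<Rightarrow> 'w::real_vector) \<Rightarrow> ('b \<Rightarrow> 'w)" where
  "ext1 f A = (\<lambda>c. \<Sum>a\<in>UNIV. (f (axis a 1) $ c) *\<^sub>R A a)"

definition ext2 :: "('w::real_vector \<Rightarrow> 'w \<Rightarrow> 'w) \<Rightarrow> (real^'a \<Rightarrow> real^'b \<Rightarrow> real^'c)
    \<Rightarrow> ('a::finite \<Rightarrow> 'w) \<Rightarrow> ('b::finite \<Rightarrow> 'w) \<Rightarrow> ('c \<Rightarrow> 'w)" where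
  "ext2 wedge f A B = (\<lambda>c. \<Sum>a\<in>UNIV. \<Sum>b\<in>UNIV. (f (axis a 1) (axis b 1) $ c) *\<^sub>R wedge (A a) (B b))"

definition pair2 :: "('w::real_vector \<Rightarrow> 'w \<Rightarrow> 'w) \<Rightarrow> (real^'a \<Rightarrow> real^'b \<Rightarrow> real)
    \<Rightarrow> ('a::finite \<Rightarrow> 'w) \<Rightarrow> ('b::finite \<Rightarrow> 'w) \<Rightarrow> 'w" where
  "pair2 wedge p A B = (\<Sum>a\<in>UNIV. \<Sum>b\<in>UNIV. p (axis a 1) (axis b 1) *\<^sub>R wedge (A a) (B b))"

definition fake_curv :: "('w::real_vector \<Rightarrow> 'w \<Rightarrow> 'w) \<Rightarrow> ('w \<Rightarrow> 'w)
    \<Rightarrow> (real^'g \<Rightarrow> real^'g \<Rightarrow> real^'g) \<Rightarrow> ('g::finite \<Rightarrow> 'w) \<Rightarrow> ('g \<Rightarrow> 'w)" where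
  "fake_curv wedge d brg A = (\<lambda>i. d (A i) + (1/2) *\<^sub>R ext2 wedge brg A A i)"

definition curv1 :: "('w::real_vector \<Rightarrow> 'w \<Rightarrow> 'w) \<Rightarrow> ('w \<Rightarrow> 'w)
    \<Rightarrow> (real^'g \<Rightarrow> real^'g \<Rightarrow> real^'g) \<Rightarrow> (real^'h \<Rightarrow> real^'g)
    \<Rightarrow> ('g::finite \<Rightarrow> 'w) \<Rightarrow> ('h::finite \<Rightarrow> 'w) \<Rightarrow> ('g \<Rightarrow> 'w)" where
  "curv1 wedge d brg \<alpha> A B = (\<lambda>i. d (A i) + (1/2) *\<^sub>R ext2 wedge brg A A i - ext1 \<alpha> B i)"

definition curv2 :: "('w::real_vector \<Rightarrow> 'w \<Rightarrow> 'w) \<Rightarrow> ('w \<Rightarrow> 'w)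
    \<Rightarrow> (real^'g \<Rightarrow> real^'h \<Rightarrow> real^'h) \<Rightarrow> (real^'l \<Rightarrow> real^'h)
    \<Rightarrow> ('g::finite \<Rightarrow> 'w) \<Rightarrow> ('h::finite \<Rightarrow> 'w) \<Rightarrow> ('l::finite \<Rightarrow> 'w) \<Rightarrow> ('h \<Rightarrow> 'w)" where
  "curv2 wedge d acth \<beta> A B C = (\<lambda>i. d (B i) + ext2 wedge acth A B i - ext1 \<beta> C i)"

definition curv3 :: "('w::real_vector \<Rightarrow> 'w \<Rightarrow> 'w) \<Rightarrow> ('w \<Rightarrow> 'w)
    \<Rightarrow> (real^'g \<Rightarrow> real^'l \<Rightarrow> real^'l) \<Rightarrow> (real^'h \<Rightarrow> real^'h \<Rightarrow> real^'l)
    \<Rightarrow> ('g::finite \<Rightarrow> 'w) \<Rightarrow> ('h::finite \<Rightarrow> 'w) \<Rightarrow> ('l::finite \<Rightarrow> 'w) \<Rightarrow> ('l \<Rightarrow> 'w)" where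
  "curv3 wedge d actl pf A B C = (\<lambda>i. d (C i) + ext2 wedge actl A C i + ext2 wedge pf B B i)"

definition CS5 :: "('w::real_vector \<Rightarrow> 'w \<Rightarrow> 'w) \<Rightarrow> ('w \<Rightarrow> 'w)
    \<Rightarrow> (real^'g \<Rightarrow> real^'g \<Rightarrow> real^'g) \<Rightarrow> (real^'h \<Rightarrow> real^'g) \<Rightarrow> (real^'l \<Rightarrow> real^'h)
    \<Rightarrow> (real^'g \<Rightarrow> real^'h \<Rightarrow> real^'h) \<Rightarrow> (real^'h \<Rightarrow> real^'h \<Rightarrow> real) \<Rightarrow> (real^'g \<Rightarrow> real^'l \<Rightarrow> real)
    \<Rightarrow> ('g::finite \<Rightarrow> 'w) \<Rightarrow> ('h::finite \<Rightarrow> 'w) \<Rightarrow> ('l::finite \<Rightarrow> 'w) \<Rightarrow> 'w" where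
  "CS5 wedge d brg \<alpha> \<beta> acth ph pgl A B C =
     pair2 wedge pgl (\<lambda>i. 2 *\<^sub>R fake_curv wedge d brg A i - ext1 \<alpha> B i) C
     + pair2 wedge ph B (curv2 wedge d acth \<beta> A B C)
     - d (pair2 wedge pgl A C)"

end

theory Submission
  imports Defs
begin

lemma lin_expand:
  fixes g :: "real^'n \<Rightarrow> 'b::real_vector"
  assumes "linear g"
  shows "g v = (\<Sum>c\<in>UNIV. (v$c) *\<^sub>R g (axis c 1))"
proof -
  have "v = (\<Sum>c\<in>UNIV. (v$c) *\<^sub>R axis c 1)"
    using basis_expansion[of v] by (simp add: scalar_mult_eq_scaleR)
  then have "g v = g (\<Sum>c\<in>UNIV. (v$c) *\<^sub>R axis c 1)" by simp
  also have "\<dots> = (\<Sum>c\<in>UNIV. (v$c) *\<^sub>R g (axis c 1))"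
    using assms by (simp add: linear_sum linear_scale)
  finally show ?thesis .
qed


definition bi :: "('w::real_vector \<Rightarrow> 'w \<Rightarrow> 'w) \<Rightarrow> ('a::finite \<Rightarrow> 'b::finite \<Rightarrow> real) \<Rightarrow> ('a \<Rightarrow> 'w) \<Rightarrow> ('b \<Rightarrow> 'w) \<Rightarrow> 'w" where
  "bi W t X Y = (\<Sum>a\<in>UNIV. \<Sum>b\<in>UNIV. t a b *\<^sub>R W (X a) (Y b))"

definition tri :: "('w::real_vector \<Rightarrow> 'w \<Rightarrow> 'w) \<Rightarrow> ('a::finite \<Rightarrow> 'b::finite \<Rightarrow> 'c::finite \<Rightarrow> real)
   \<Rightarrow> ('a \<Rightarrow> 'w) \<Rightarrow> ('b \<Rightarrow> 'w) \<Rightarrow> ('c \<Rightarrow> 'w) \<Rightarrow> 'w" where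
  "tri W t X Y Z = (\<Sum>a\<in>UNIV. \<Sum>b\<in>UNIV. \<Sum>c\<in>UNIV. t a b c *\<^sub>R W (W (X a) (Y b)) (Z c))"

definition quad :: "('w::real_vector \<Rightarrow> 'w \<Rightarrow> 'w) \<Rightarrow> ('a::finite \<Rightarrow> 'b::finite \<Rightarrow> 'c::finite \<Rightarrow> 'e::finite \<Rightarrow> real)
   \<Rightarrow> ('a \<Rightarrow> 'w) \<Rightarrow> ('b \<Rightarrow> 'w) \<Rightarrow> ('c \<Rightarrow> 'w) \<Rightarrow> ('e \<Rightarrow> 'w) \<Rightarrow> 'w" where
  "quad W t X Y Z U = (\<Sum>a\<in>UNIV. \<Sum>b\<in>UNIV. \<Sum>c\<in>UNIV. \<Sum>e\<in>UNIV. t a b c e *\<^sub>R W (W (W (X a) (Y b)) (Z c)) (U e))"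

locale fa =
  fixes W :: "'w::real_vector \<Rightarrow> 'w \<Rightarrow> 'w" and d :: "'w \<Rightarrow> 'w" and hom :: "nat \<Rightarrow> 'w set"
  assumes F: "forms_algebra W d hom"
begin

lemma bil: "bilinear W" using F unfolding forms_algebra_def by blast
lemma lind: "linear d" using F unfolding forms_algebra_def by blast
lemma assoc: "W (W a b) c = W a (W b c)" using F unfolding forms_algebra_def by blast
lemma hom_mul: "a \<in> hom p \<Longrightarrow> b \<in> hom q \<Longrightarrow> W a b \<in> hom (p + q)" using F unfolding forms_algebra_def by blast
lemma comm: "a \<in> hom p \<Longrightarrow> b \<in> hom q \<Longrightarrow> W a b = (-1) ^ (p * q) *\<^sub>R W b a" using F unfolding forms_algebra_def by blast
lemma d_hom: "a \<in> hom p \<Longrightarrow> d a \<in> hom (Suc p)" using F unfolding forms_algebra_def by blast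
lemma dd: "d (d a) = 0" using F unfolding forms_algebra_def by blast
lemma leib: "a \<in> hom p \<Longrightarrow> d (W a b) = W (d a) b + (-1) ^ p *\<^sub>R W a (d b)" using F unfolding forms_algebra_def by blast

lemma Wsum_left: "W (\<Sum>i\<in>S. f i) y = (\<Sum>i\<in>S. W (f i) y)"
proof -
  have "linear (\<lambda>x. W x y)" using bil by (simp add: bilinear_def)
  from linear_sum[OF this, of f S] show ?thesis by simp
qed
lemma Wsum_right: "W y (\<Sum>i\<in>S. f i) = (\<Sum>i\<in>S. W y (f i))"
proof -
  have "linear (\<lambda>x. W y x)" using bil by (simp add: bilinear_def)
  from linear_sum[OF this, of f S] show ?thesis by simp
qed
lemma Wscale_left: "W (c *\<^sub>R x) y = c *\<^sub>R W x y" using bil by (rule bilinear_lmul)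
lemma Wscale_right: "W x (c *\<^sub>R y) = c *\<^sub>R W x y" using bil by (rule bilinear_rmul)
lemma Wadd_left: "W (x + z) y = W x y + W z y" using bil by (rule bilinear_ladd)
lemma Wadd_right: "W x (y + z) = W x y + W x z" using bil by (rule bilinear_radd)
lemma Wdiff_left: "W (x - z) y = W x y - W z y" using bil by (rule bilinear_lsub)
lemma Wdiff_right: "W x (y - z) = W x y - W x z" using bil by (rule bilinear_rsub)
lemma Wzero_left: "W 0 y = 0" using bil by (rule bilinear_lzero)
lemma Wzero_right: "W y 0 = 0" using bil by (rule bilinear_rzero)

lemma dsum: "d (\<Sum>i\<in>S. f i) = (\<Sum>i\<in>S. d (f i))" using lind by (simp add: linear_sum)
lemma dscale: "d (c *\<^sub>R x) = c *\<^sub>R d x" using lind by (simp add: linear_scale)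
lemma dadd: "d (x + y) = d x + d y" using lind by (simp add: linear_add)
lemma ddiff: "d (x - y) = d x - d y" using lind by (simp add: linear_diff)
lemma dzero: "d 0 = 0" using lind by (simp add: linear_0)

lemmas Wlin = Wsum_left Wsum_right Wscale_left Wscale_right Wadd_left Wadd_right Wdiff_left Wdiff_right Wzero_left Wzero_right
lemmas dlin = dsum dscale dadd ddiff dzero

lemma vform_d: "vform hom k X \<Longrightarrow> vform hom (Suc k) (dV d X)"
  by (simp add: vform_def dV_def d_hom)

lemma bi_d:
  assumes X: "vform hom k X"
  shows "d (bi W t X Y) = bi W t (dV d X) Y + (-1)^k *\<^sub>R bi W t X (dV d Y)"
proof -
  have l: "\<And>a b. d (W (X a) (Y b)) = W (d (X a)) (Y b) + (-1)^k *\<^sub>R W (X a) (d (Y b))"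
    using X leib[of _ k] by (simp add: vform_def)
  show ?thesis unfolding bi_def dV_def
    by (simp add: dlin l scaleR_add_right sum.distrib scaleR_sum_right mult.commute)
qed

lemma tri_d:
  assumes X: "vform hom k X" and Y: "vform hom l Y"
  shows "d (tri W t X Y Z) = tri W t (dV d X) Y Z + (-1)^k *\<^sub>R tri W t X (dV d Y) Z
     + (-1)^(k+l) *\<^sub>R tri W t X Y (dV d Z)"
proof -
  have l: "d (W (W (X a) (Y b)) (Z c)) = W (W (d (X a)) (Y b)) (Z c)
     + (-1)^k *\<^sub>R W (W (X a) (d (Y b))) (Z c) + (-1)^(k+l) *\<^sub>R W (W (X a) (Y b)) (d (Z c))"
    for a b c
  proof -
    have xa: "X a \<in> hom k" and yb: "Y b \<in> hom l" using X Y by (auto simp: vform_def)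
    show ?thesis using leib[OF hom_mul[OF xa yb]] leib[OF xa] by (simp add: Wadd_left Wscale_left)
  qed
  show ?thesis unfolding tri_def dV_def
    by (simp add: dsum dscale l scaleR_add_right sum.distrib scaleR_sum_right mult.commute)
qed

end

lemma S_rot3: "(\<Sum>a\<in>A. \<Sum>b\<in>B. \<Sum>c\<in>C. f a b c) = (\<Sum>b\<in>B. \<Sum>c\<in>C. \<Sum>a\<in>A. f a b c)"
proof -
  have "(\<Sum>a\<in>A. \<Sum>b\<in>B. \<Sum>c\<in>C. f a b c) = (\<Sum>b\<in>B. \<Sum>a\<in>A. \<Sum>c\<in>C. f a b c)"
    by (rule sum.swap)
  also have "\<dots> = (\<Sum>b\<in>B. \<Sum>c\<in>C. \<Sum>a\<in>A. f a b c)"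
    by (rule sum.cong[OF refl], rule sum.swap)
  finally show ?thesis .
qed

lemma S_swap23: "(\<Sum>a\<in>A. \<Sum>b\<in>B. \<Sum>c\<in>C. f a b c) = (\<Sum>a\<in>A. \<Sum>c\<in>C. \<Sum>b\<in>B. f a b c)"
  by (rule sum.cong[OF refl], rule sum.swap)

lemma S_swap34: "(\<Sum>a\<in>A. \<Sum>b\<in>B. \<Sum>c\<in>C. \<Sum>e\<in>E. f a b c e) = (\<Sum>a\<in>A. \<Sum>b\<in>B. \<Sum>e\<in>E. \<Sum>c\<in>C. f a b c e)"
  by (rule sum.cong[OF refl], rule sum.cong[OF refl], rule sum.swap)

lemma S_rot4: "(\<Sum>k\<in>K. \<Sum>a\<in>A. \<Sum>b\<in>B. \<Sum>c\<in>C. f k a b c) = (\<Sum>a\<in>A. \<Sum>b\<in>B. \<Sum>c\<in>C. \<Sum>k\<in>K. f k a b c)"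
proof -
  have "(\<Sum>k\<in>K. \<Sum>a\<in>A. \<Sum>b\<in>B. \<Sum>c\<in>C. f k a b c) = (\<Sum>a\<in>A. \<Sum>b\<in>B. \<Sum>k\<in>K. \<Sum>c\<in>C. f k a b c)"
    by (rule S_rot3)
  also have "\<dots> = (\<Sum>a\<in>A. \<Sum>b\<in>B. \<Sum>c\<in>C. \<Sum>k\<in>K. f k a b c)"
    by (rule sum.cong[OF refl], rule sum.cong[OF refl], rule sum.swap)
  finally show ?thesis .
qed

lemma lin_expand_real:
  fixes g :: "real^'n \<Rightarrow> real"
  assumes "linear g"
  shows "g v = (\<Sum>c\<in>UNIV. v$c * g (axis c 1))"
  using lin_expand[OF assms, of v] by simp

lemma bil_l: "bilinear p \<Longrightarrow> linear (\<lambda>x. p x y)" by (simp add: bilinear_def)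
lemma bil_r: "bilinear p \<Longrightarrow> linear (\<lambda>y. p x y)" by (simp add: bilinear_def)

lemma bil_comp_l: "bilinear p \<Longrightarrow> linear f \<Longrightarrow> bilinear (\<lambda>x y. p (f x) y)"
  unfolding bilinear_def by (auto intro: linear_compose[unfolded o_def])
lemma bil_comp_r: "bilinear p \<Longrightarrow> linear f \<Longrightarrow> bilinear (\<lambda>x y. p x (f y))"
  unfolding bilinear_def by (auto intro: linear_compose[unfolded o_def])

context fa begin

lemma bi_swap:
  assumes X: "vform hom k X" and Y: "vform hom l Y"
  shows "bi W t X Y = (-1)^(k*l) *\<^sub>R bi W (\<lambda>b a. t a b) Y X"
proof -
  have m: "W (X a) (Y b) = (-1)^(k*l) *\<^sub>R W (Y b) (X a)" for a b
    using X Y comm by (simp add: vform_def)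
  have "bi W t X Y = (-1)^(k*l) *\<^sub>R (\<Sum>a\<in>UNIV. \<Sum>b\<in>UNIV. t a b *\<^sub>R W (Y b) (X a))"
    unfolding bi_def by (simp add: m scaleR_sum_right mult.commute)
  also have "\<dots> = (-1)^(k*l) *\<^sub>R bi W (\<lambda>b a. t a b) Y X"
    unfolding bi_def by (subst sum.swap) simp
  finally show ?thesis .
qed

lemma tri_swap12:
  assumes X: "vform hom k X" and Y: "vform hom l Y"
  shows "tri W t X Y Z = (-1)^(k*l) *\<^sub>R tri W (\<lambda>b a c. t a b c) Y X Z"
proof -
  have m: "W (X a) (Y b) = (-1)^(k*l) *\<^sub>R W (Y b) (X a)" for a b
    using X Y comm by (simp add: vform_def)
  have "tri W t X Y Z = (-1)^(k*l) *\<^sub>R (\<Sum>a\<in>UNIV. \<Sum>b\<in>UNIV. \<Sum>c\<in>UNIV. t a b c *\<^sub>R W (W (Y b) (X a)) (Z c))"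
    unfolding tri_def by (simp add: m Wscale_left scaleR_sum_right mult.commute)
  also have "\<dots> = (-1)^(k*l) *\<^sub>R tri W (\<lambda>b a c. t a b c) Y X Z"
    unfolding tri_def by (subst sum.swap) simp
  finally show ?thesis .
qed

lemma tri_rot:
  assumes X: "vform hom k X" and Y: "vform hom l Y" and Z: "vform hom m Z"
  shows "tri W t X Y Z = (-1)^(k*(l+m)) *\<^sub>R tri W (\<lambda>b c a. t a b c) Y Z X"
proof -
  have mm: "W (W (X a) (Y b)) (Z c) = (-1)^(k*(l+m)) *\<^sub>R W (W (Y b) (Z c)) (X a)" for a b c
    using X Y Z comm[of "X a" k "W (Y b) (Z c)" "l+m"] hom_mul assoc by (simp add: vform_def)
  have "tri W t X Y Z = (-1)^(k*(l+m)) *\<^sub>R (\<Sum>a\<in>UNIV. \<Sum>b\<in>UNIV. \<Sum>c\<in>UNIV. t a b c *\<^sub>R W (W (Y b) (Z c)) (X a))"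
    unfolding tri_def by (simp add: mm scaleR_sum_right mult.commute)
  also have "\<dots> = (-1)^(k*(l+m)) *\<^sub>R tri W (\<lambda>b c a. t a b c) Y Z X"
    unfolding tri_def by (subst S_rot3) simp
  finally show ?thesis .
qed

lemma quad_swap12:
  assumes X: "vform hom k X" and Y: "vform hom l Y"
  shows "quad W t X Y Z U = (-1)^(k*l) *\<^sub>R quad W (\<lambda>b a c e. t a b c e) Y X Z U"
proof -
  have m: "W (X a) (Y b) = (-1)^(k*l) *\<^sub>R W (Y b) (X a)" for a b
    using X Y comm by (simp add: vform_def)
  have "quad W t X Y Z U = (-1)^(k*l) *\<^sub>R (\<Sum>a\<in>UNIV. \<Sum>b\<in>UNIV. \<Sum>c\<in>UNIV. \<Sum>e\<in>UNIV. t a b c e *\<^sub>R W (W (W (Y b) (X a)) (Z c)) (U e))"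
    unfolding quad_def by (simp add: m Wscale_left scaleR_sum_right mult.commute)
  also have "\<dots> = (-1)^(k*l) *\<^sub>R quad W (\<lambda>b a c e. t a b c e) Y X Z U"
    unfolding quad_def by (subst sum.swap) simp
  finally show ?thesis .
qed

lemma quad_swap23:
  assumes Y: "vform hom l Y" and Z: "vform hom m Z"
  shows "quad W t X Y Z U = (-1)^(l*m) *\<^sub>R quad W (\<lambda>a c b e. t a b c e) X Z Y U"
proof -
  have mm: "W (W (W (X a) (Y b)) (Z c)) (U e) = (-1)^(l*m) *\<^sub>R W (W (W (X a) (Z c)) (Y b)) (U e)" for a b c e
    using Y Z comm[of "Y b" l "Z c" m] assoc by (simp add: vform_def Wscale_left Wscale_right)
  have "quad W t X Y Z U = (-1)^(l*m) *\<^sub>R (\<Sum>a\<in>UNIV. \<Sum>b\<in>UNIV. \<Sum>c\<in>UNIV. \<Sum>e\<in>UNIV. t a b c e *\<^sub>R W (W (W (X a) (Z c)) (Y b)) (U e))"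
    unfolding quad_def by (simp add: mm scaleR_sum_right mult.commute)
  also have "\<dots> = (-1)^(l*m) *\<^sub>R quad W (\<lambda>a c b e. t a b c e) X Z Y U"
    unfolding quad_def by (subst S_swap23) simp
  finally show ?thesis .
qed

lemma quad_swap34:
  assumes Z: "vform hom m Z" and U: "vform hom n U"
  shows "quad W t X Y Z U = (-1)^(m*n) *\<^sub>R quad W (\<lambda>a b e c. t a b c e) X Y U Z"
proof -
  have mm: "W (W (W (X a) (Y b)) (Z c)) (U e) = (-1)^(m*n) *\<^sub>R W (W (W (X a) (Y b)) (U e)) (Z c)" for a b c e
    using Z U comm[of "Z c" m "U e" n] assoc by (simp add: vform_def Wscale_left Wscale_right)
  have "quad W t X Y Z U = (-1)^(m*n) *\<^sub>R (\<Sum>a\<in>UNIV. \<Sum>b\<in>UNIV. \<Sum>c\<in>UNIV. \<Sum>e\<in>UNIV. t a b c e *\<^sub>R W (W (W (X a) (Y b)) (U e)) (Z c))"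
    unfolding quad_def by (simp add: mm scaleR_sum_right mult.commute)
  also have "\<dots> = (-1)^(m*n) *\<^sub>R quad W (\<lambda>a b e c. t a b c e) X Y U Z"
    unfolding quad_def by (subst S_swap34) simp
  finally show ?thesis .
qed

lemma quad_rot:
  assumes X: "vform hom k X" and Y: "vform hom l Y" and Z: "vform hom m Z"
  shows "quad W t X Y Z U = (-1)^(k*(l+m)) *\<^sub>R quad W (\<lambda>b c a e. t a b c e) Y Z X U"
proof -
  have mm: "W (W (X a) (Y b)) (Z c) = (-1)^(k*(l+m)) *\<^sub>R W (W (Y b) (Z c)) (X a)" for a b c
    using X Y Z comm[of "X a" k "W (Y b) (Z c)" "l+m"] hom_mul assoc by (simp add: vform_def)
  have "quad W t X Y Z U = (-1)^(k*(l+m)) *\<^sub>R (\<Sum>a\<in>UNIV. \<Sum>b\<in>UNIV. \<Sum>c\<in>UNIV. \<Sum>e\<in>UNIV. t a b c e *\<^sub>R W (W (W (Y b) (Z c)) (X a)) (U e))"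
    unfolding quad_def by (simp add: mm Wscale_left scaleR_sum_right mult.commute)
  also have "\<dots> = (-1)^(k*(l+m)) *\<^sub>R quad W (\<lambda>b c a e. t a b c e) Y Z X U"
    unfolding quad_def by (subst S_rot3) simp
  finally show ?thesis .
qed

end

lemma lie_anti: "lie_algebra br \<Longrightarrow> br x y = - br y x"
proof -
  assume L: "lie_algebra br"
  then have b: "bilinear br" and z: "\<And>x. br x x = 0" by (auto simp: lie_algebra_def)
  have "0 = br (x + y) (x + y)" using z by simp
  also have "\<dots> = br x y + br y x" unfolding bilinear_ladd[OF b] bilinear_radd[OF b] by (simp add: z)
  finally show ?thesis by (simp add: eq_neg_iff_add_eq_0)
qed

context fa begin

lemma pair2_add_left: "pair2 W p (\<lambda>i. X i + Y i) Z = pair2 W p X Z + pair2 W p Y Z"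
  unfolding pair2_def by (simp add: Wadd_left scaleR_add_right sum.distrib)
lemma pair2_diff_left: "pair2 W p (\<lambda>i. X i - Y i) Z = pair2 W p X Z - pair2 W p Y Z"
  unfolding pair2_def by (simp add: Wdiff_left scaleR_diff_right sum_subtractf)
lemma pair2_scale_left: "pair2 W p (\<lambda>i. c *\<^sub>R X i) Z = c *\<^sub>R pair2 W p X Z"
  unfolding pair2_def by (simp add: Wscale_left scaleR_sum_right mult.commute)
lemma pair2_add_right: "pair2 W p Z (\<lambda>i. X i + Y i) = pair2 W p Z X + pair2 W p Z Y"
  unfolding pair2_def by (simp add: Wadd_right scaleR_add_right sum.distrib)
lemma pair2_diff_right: "pair2 W p Z (\<lambda>i. X i - Y i) = pair2 W p Z X - pair2 W p Z Y"
  unfolding pair2_def by (simp add: Wdiff_right scaleR_diff_right sum_subtractf)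
lemma pair2_scale_right: "pair2 W p Z (\<lambda>i. c *\<^sub>R X i) = c *\<^sub>R pair2 W p Z X"
  unfolding pair2_def by (simp add: Wscale_right scaleR_sum_right mult.commute)

lemmas pair2_lin = pair2_add_left pair2_diff_left pair2_scale_left pair2_add_right pair2_diff_right pair2_scale_right

lemma pair2_ext1_left:
  assumes p: "bilinear p"
  shows "pair2 W p (ext1 f X) Y = pair2 W (\<lambda>x y. p (f x) y) X Y"
proof -
  have "pair2 W p (ext1 f X) Y = (\<Sum>c\<in>UNIV. \<Sum>b\<in>UNIV. \<Sum>a\<in>UNIV. (f (axis a 1) $ c * p (axis c 1) (axis b 1)) *\<^sub>R W (X a) (Y b))"
    unfolding pair2_def ext1_def by (simp add: Wsum_left Wscale_left scaleR_sum_right mult.commute)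
  also have "\<dots> = (\<Sum>a\<in>UNIV. \<Sum>b\<in>UNIV. \<Sum>c\<in>UNIV. (f (axis a 1) $ c * p (axis c 1) (axis b 1)) *\<^sub>R W (X a) (Y b))"
    by (subst sum.swap, rule S_rot3[symmetric])
  also have "\<dots> = pair2 W (\<lambda>x y. p (f x) y) X Y"
  proof -
    have e: "\<And>a b. (\<Sum>c\<in>UNIV. f (axis a 1) $ c * p (axis c 1) (axis b 1)) = p (f (axis a 1)) (axis b 1)"
      by (rule lin_expand_real[OF bil_l[OF p], symmetric])
    show ?thesis unfolding pair2_def e[symmetric] by (simp add: scaleR_sum_left)
  qed
  finally show ?thesis .
qed

lemma pair2_ext1_right:
  assumes p: "bilinear p"
  shows "pair2 W p X (ext1 f Y) = pair2 W (\<lambda>x y. p x (f y)) X Y"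
proof -
  have "pair2 W p X (ext1 f Y) = (\<Sum>a\<in>UNIV. \<Sum>c\<in>UNIV. \<Sum>b\<in>UNIV. (f (axis b 1) $ c * p (axis a 1) (axis c 1)) *\<^sub>R W (X a) (Y b))"
    unfolding pair2_def ext1_def by (simp add: Wsum_right Wscale_right scaleR_sum_right mult.commute)
  also have "\<dots> = (\<Sum>a\<in>UNIV. \<Sum>b\<in>UNIV. \<Sum>c\<in>UNIV. (f (axis b 1) $ c * p (axis a 1) (axis c 1)) *\<^sub>R W (X a) (Y b))"
    by (rule S_swap23)
  also have "\<dots> = pair2 W (\<lambda>x y. p x (f y)) X Y"
  proof -
    have e: "\<And>a b. (\<Sum>c\<in>UNIV. f (axis b 1) $ c * p (axis a 1) (axis c 1)) = p (axis a 1) (f (axis b 1))"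
      by (rule lin_expand_real[OF bil_r[OF p], symmetric])
    show ?thesis unfolding pair2_def e[symmetric] by (simp add: scaleR_sum_left)
  qed
  finally show ?thesis .
qed

lemma pair2_ext2_left:
  assumes p: "bilinear p"
  shows "pair2 W p (ext2 W f X Y) Z = tri W (\<lambda>a b c. p (f (axis a 1) (axis b 1)) (axis c 1)) X Y Z"
proof -
  have "pair2 W p (ext2 W f X Y) Z = (\<Sum>k\<in>UNIV. \<Sum>c\<in>UNIV. \<Sum>a\<in>UNIV. \<Sum>b\<in>UNIV.
          (f (axis a 1) (axis b 1) $ k * p (axis k 1) (axis c 1)) *\<^sub>R W (W (X a) (Y b)) (Z c))"
    unfolding pair2_def ext2_def by (simp add: Wsum_left Wscale_left scaleR_sum_right mult.commute)
  also have "\<dots> = (\<Sum>c\<in>UNIV. \<Sum>a\<in>UNIV. \<Sum>b\<in>UNIV. \<Sum>k\<in>UNIV.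
          (f (axis a 1) (axis b 1) $ k * p (axis k 1) (axis c 1)) *\<^sub>R W (W (X a) (Y b)) (Z c))"
    by (rule S_rot4)
  also have "\<dots> = (\<Sum>a\<in>UNIV. \<Sum>b\<in>UNIV. \<Sum>c\<in>UNIV. \<Sum>k\<in>UNIV.
          (f (axis a 1) (axis b 1) $ k * p (axis k 1) (axis c 1)) *\<^sub>R W (W (X a) (Y b)) (Z c))"
    by (rule S_rot3)
  also have "\<dots> = tri W (\<lambda>a b c. p (f (axis a 1) (axis b 1)) (axis c 1)) X Y Z"
  proof -
    have e: "\<And>a b c. (\<Sum>k\<in>UNIV. f (axis a 1) (axis b 1) $ k * p (axis k 1) (axis c 1)) = p (f (axis a 1) (axis b 1)) (axis c 1)"
      by (rule lin_expand_real[OF bil_l[OF p], symmetric])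
    show ?thesis unfolding tri_def e[symmetric] by (simp add: scaleR_sum_left)
  qed
  finally show ?thesis .
qed

lemma pair2_ext2_right:
  assumes p: "bilinear p"
  shows "pair2 W p X (ext2 W f Y Z) = tri W (\<lambda>a b c. p (axis a 1) (f (axis b 1) (axis c 1))) X Y Z"
proof -
  have "pair2 W p X (ext2 W f Y Z) = (\<Sum>a\<in>UNIV. \<Sum>k\<in>UNIV. \<Sum>b\<in>UNIV. \<Sum>c\<in>UNIV.
          (f (axis b 1) (axis c 1) $ k * p (axis a 1) (axis k 1)) *\<^sub>R W (W (X a) (Y b)) (Z c))"
    unfolding pair2_def ext2_def by (simp add: Wsum_right Wscale_right scaleR_sum_right mult.commute assoc)
  also have "\<dots> = (\<Sum>a\<in>UNIV. \<Sum>b\<in>UNIV. \<Sum>c\<in>UNIV. \<Sum>k\<in>UNIV.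
          (f (axis b 1) (axis c 1) $ k * p (axis a 1) (axis k 1)) *\<^sub>R W (W (X a) (Y b)) (Z c))"
    by (rule sum.cong[OF refl], rule S_rot3)
  also have "\<dots> = tri W (\<lambda>a b c. p (axis a 1) (f (axis b 1) (axis c 1))) X Y Z"
  proof -
    have e: "\<And>a b c. (\<Sum>k\<in>UNIV. f (axis b 1) (axis c 1) $ k * p (axis a 1) (axis k 1)) = p (axis a 1) (f (axis b 1) (axis c 1))"
      by (rule lin_expand_real[OF bil_r[OF p], symmetric])
    show ?thesis unfolding tri_def e[symmetric] by (simp add: scaleR_sum_left)
  qed
  finally show ?thesis .
qed

lemma tri_ext2_right:
  assumes q: "\<And>a b. linear (q a b)"
  shows "tri W (\<lambda>a b k. q a b (axis k 1)) X Y (ext2 W g Z U)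
    = quad W (\<lambda>a b c e. q a b (g (axis c 1) (axis e 1))) X Y Z U"
proof -
  have "tri W (\<lambda>a b k. q a b (axis k 1)) X Y (ext2 W g Z U) = (\<Sum>a\<in>UNIV. \<Sum>b\<in>UNIV. \<Sum>k\<in>UNIV. \<Sum>c\<in>UNIV. \<Sum>e\<in>UNIV.
          (g (axis c 1) (axis e 1) $ k * q a b (axis k 1)) *\<^sub>R W (W (W (X a) (Y b)) (Z c)) (U e))"
    unfolding tri_def ext2_def by (simp add: Wsum_right Wscale_right scaleR_sum_right mult.commute assoc)
  also have "\<dots> = (\<Sum>a\<in>UNIV. \<Sum>b\<in>UNIV. \<Sum>c\<in>UNIV. \<Sum>e\<in>UNIV. \<Sum>k\<in>UNIV.
          (g (axis c 1) (axis e 1) $ k * q a b (axis k 1)) *\<^sub>R W (W (W (X a) (Y b)) (Z c)) (U e))"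
    by (rule sum.cong[OF refl], rule sum.cong[OF refl], rule S_rot3)
  also have "\<dots> = quad W (\<lambda>a b c e. q a b (g (axis c 1) (axis e 1))) X Y Z U"
  proof -
    have e: "\<And>a b c e. (\<Sum>k\<in>UNIV. g (axis c 1) (axis e 1) $ k * q a b (axis k 1)) = q a b (g (axis c 1) (axis e 1))"
      by (rule lin_expand_real[OF q, symmetric])
    show ?thesis unfolding quad_def e[symmetric] by (simp add: scaleR_sum_left)
  qed
  finally show ?thesis .
qed

lemma pair2_ext2_both:
  assumes p: "bilinear p"
  shows "pair2 W p (ext2 W f X Y) (ext2 W g Z U)
    = quad W (\<lambda>a b c e. p (f (axis a 1) (axis b 1)) (g (axis c 1) (axis e 1))) X Y Z U"
  unfolding pair2_ext2_left[OF p]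
  by (rule tri_ext2_right[of "\<lambda>a b y. p (f (axis a 1) (axis b 1)) y"]) (rule bil_r[OF p])

lemma bi_zero_left: "bi W t (\<lambda>i. 0) Y = 0"
  unfolding bi_def by (simp add: Wzero_left)

lemma bi_comb:
  assumes "\<And>a b. c1 * t1 a b + c2 * t2 a b = s a b"
  shows "c1 *\<^sub>R bi W t1 X Y + c2 *\<^sub>R bi W t2 X Y = bi W s X Y"
  unfolding bi_def by (simp add: scaleR_sum_right sum.distrib[symmetric] scaleR_add_left[symmetric] assms flip: assms)

lemma tri_comb:
  assumes "\<And>a b c. c1 * t1 a b c + c2 * t2 a b c = s a b c"
  shows "c1 *\<^sub>R tri W t1 X Y Z + c2 *\<^sub>R tri W t2 X Y Z = tri W s X Y Z"
  unfolding tri_def by (simp add: scaleR_sum_right sum.distrib[symmetric] scaleR_add_left[symmetric] flip: assms)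

lemma quad_comb:
  assumes "\<And>a b c e. c1 * t1 a b c e + c2 * t2 a b c e = s a b c e"
  shows "c1 *\<^sub>R quad W t1 X Y Z U + c2 *\<^sub>R quad W t2 X Y Z U = quad W s X Y Z U"
  unfolding quad_def by (simp add: scaleR_sum_right sum.distrib[symmetric] scaleR_add_left[symmetric] flip: assms)

lemma bi_cong: "(\<And>a b. t a b = s a b) \<Longrightarrow> bi W t X Y = bi W s X Y"
  unfolding bi_def by simp
lemma tri_cong: "(\<And>a b c. t a b c = s a b c) \<Longrightarrow> tri W t X Y Z = tri W s X Y Z"
  unfolding tri_def by simp
lemma quad_cong: "(\<And>a b c e. t a b c e = s a b c e) \<Longrightarrow> quad W t X Y Z U = quad W s X Y Z U"
  unfolding quad_def by simp
lemma bi_zero: "(\<And>a b. t a b = 0) \<Longrightarrow> bi W t X Y = 0"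
  unfolding bi_def by simp
lemma tri_zero: "(\<And>a b c. t a b c = 0) \<Longrightarrow> tri W t X Y Z = 0"
  unfolding tri_def by simp
lemma quad_zero: "(\<And>a b c e. t a b c e = 0) \<Longrightarrow> quad W t X Y Z U = 0"
  unfolding quad_def by simp

end

theorem mainTheorem10:
  fixes wedge :: "'w::real_vector \<Rightarrow> 'w \<Rightarrow> 'w" and d :: "'w \<Rightarrow> 'w" and hom :: "nat \<Rightarrow> 'w set"
    and brl :: "real^'l \<Rightarrow> real^'l \<Rightarrow> real^'l"
    and brh :: "real^'h \<Rightarrow> real^'h \<Rightarrow> real^'h"
    and brg :: "real^'g \<Rightarrow> real^'g \<Rightarrow> real^'g"
    and \<beta> :: "real^'l \<Rightarrow> real^'h" and \<alpha> :: "real^'h \<Rightarrow> real^'g"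
    and actl :: "real^'g \<Rightarrow> real^'l \<Rightarrow> real^'l" and acth :: "real^'g \<Rightarrow> real^'h \<Rightarrow> real^'h"
    and pf :: "real^'h \<Rightarrow> real^'h \<Rightarrow> real^'l"
    and ph :: "real^'h \<Rightarrow> real^'h \<Rightarrow> real" and pgl :: "real^'g \<Rightarrow> real^'l \<Rightarrow> real"
    and A :: "'g::finite \<Rightarrow> 'w" and B :: "'h::finite \<Rightarrow> 'w" and C :: "'l::finite \<Rightarrow> 'w"
  assumes forms: "forms_algebra wedge d hom"
    and xmod: "diff_2crossed_module brl brh brg \<beta> \<alpha> actl acth pf"
    and pairings: "invariant_pairings brl brh brg \<beta> \<alpha> actl acth pf ph pgl"
    and A1: "vform hom 1 A" and B2: "vform hom 2 B" and C3: "vform hom 3 C"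
  shows "d (CS5 wedge d brg \<alpha> \<beta> acth ph pgl A B C) =
           2 *\<^sub>R pair2 wedge pgl (curv1 wedge d brg \<alpha> A B) (curv3 wedge d actl pf A B C)
           + pair2 wedge ph (curv2 wedge d acth \<beta> A B C) (curv2 wedge d acth \<beta> A B C)"
proof -
  interpret fa wedge d hom by (rule fa.intro[OF forms])
  note X = xmod[unfolded diff_2crossed_module_def lie_hom_def lie_action_deriv_def]
  note P = pairings[unfolded invariant_pairings_def]
  have bpgl: "bilinear pgl" using P by blast
  have bph: "bilinear ph" using P by blast
  have lal: "linear \<alpha>" using X by blast
  have lbe: "linear \<beta>" using X by blast
  have lg: "lie_algebra brg" and lh: "lie_algebra brh" using X by blast+
  have bbrg: "bilinear brg" using lg by (simp add: lie_algebra_def)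
  have bbrh: "bilinear brh" using lh by (simp add: lie_algebra_def)
  have bacth: "bilinear acth" using X by blast
  have bactl: "bilinear actl" using X by blast
  have jac: "\<And>x y z. brg x (brg y z) + brg y (brg z x) + brg z (brg x y) = 0" using lg by (simp add: lie_algebra_def)
  have ab0': "\<forall>Z. \<alpha> (\<beta> Z) = 0" using X by (elim conjE) assumption
  note ab0 = ab0'[rule_format]
  have beact': "\<forall>X Z. \<beta> (actl X Z) = acth X (\<beta> Z)" using X by (elim conjE) assumption
  note beact = beact'[rule_format]
  have bepf': "\<forall>Y1 Y2. \<beta> (pf Y1 Y2) = brh Y1 Y2 - acth (\<alpha> Y1) Y2" using X by (elim conjE) assumption
  note bepf = bepf'[rule_format]
  have acthbr': "\<forall>X1 X2 v. acth (brg X1 X2) v = acth X1 (acth X2 v) - acth X2 (acth X1 v)" using X by (elim conjE) assumption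
  note acthbr = acthbr'[rule_format]
  have ph_anti': "\<forall>Y1 Y2. ph Y1 Y2 = - ph Y2 Y1" using P by (elim conjE) assumption
  note ph_anti = ph_anti'[rule_format]
  have ph_sym': "\<forall>X Y Y1. ph Y (acth X Y1) = ph Y1 (acth X Y)" using P by (elim conjE) assumption
  note ph_sym = ph_sym'[rule_format]
  have ph_act': "\<forall>X Y1 Y2. ph (acth X Y1) Y2 + ph Y1 (acth X Y2) = 0" using P by (elim conjE) assumption
  note ph_act = ph_act'[rule_format]
  have pgl_br': "\<forall>X1 X2 Z. pgl (brg X1 X2) Z = - pgl X2 (actl X1 Z)" using P by (elim conjE) assumption
  note pgl_br = pgl_br'[rule_format]
  have pgl_al': "\<forall>Y Z. pgl (\<alpha> Y) Z = - ph (\<beta> Z) Y" using P by (elim conjE) assumption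
  note pgl_al = pgl_al'[rule_format]
  have pgl_pf': "\<forall>X Y1 Y2. pgl X (pf Y1 Y2) = (1/2) * ph Y2 (acth X Y1)" using P by (elim conjE) assumption
  note pgl_pf = pgl_pf'[rule_format]
  have b1: "bilinear (\<lambda>x y. pgl (\<alpha> x) y)" by (rule bil_comp_l[OF bpgl lal])
  have b2: "bilinear (\<lambda>x y. ph x (\<beta> y))" by (rule bil_comp_r[OF bph lbe])
  have b3: "bilinear (\<lambda>x y. ph (\<beta> x) y)" by (rule bil_comp_l[OF bph lbe])
  have b4: "bilinear (\<lambda>x y. ph (\<beta> x) (\<beta> y))" by (rule bil_comp_l[OF b2 lbe])
  have dA2: "vform hom 2 (\<lambda>i. d (A i))" using vform_d[OF A1] by (simp add: dV_def eval_nat_numeral)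
  have dB3: "vform hom 3 (\<lambda>i. d (B i))" using vform_d[OF B2] by (simp add: dV_def eval_nat_numeral)
  have dC4: "vform hom 4 (\<lambda>i. d (C i))" using vform_d[OF C3] by (simp add: dV_def eval_nat_numeral)
  define P1 where "P1 = (\<lambda>a p. pgl (axis a 1) (axis p 1))"
  define T2 where "T2 = (\<lambda>a b p. pgl (brg (axis a 1) (axis b 1)) (axis p 1))"
  define P3 where "P3 = (\<lambda>i p. pgl (\<alpha> (axis i 1)) (axis p 1))"
  define Q where "Q = (\<lambda>i j. ph (axis i 1) (axis j 1))"
  define T5 where "T5 = (\<lambda>i a j. ph (axis i 1) (acth (axis a 1) (axis j 1)))"
  define P6 where "P6 = (\<lambda>i p. ph (axis i 1) (\<beta> (axis p 1)))"
  define U2 where "U2 = (\<lambda>a b p. pgl (axis a 1) (actl (axis b 1) (axis p 1)))"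
  define U3 where "U3 = (\<lambda>a i j. pgl (axis a 1) (pf (axis i 1) (axis j 1)))"
  define V5 where "V5 = (\<lambda>a b c p. pgl (brg (axis a 1) (axis b 1)) (actl (axis c 1) (axis p 1)))"
  define V6 where "V6 = (\<lambda>a b i j. pgl (brg (axis a 1) (axis b 1)) (pf (axis i 1) (axis j 1)))"
  define U8 where "U8 = (\<lambda>i a p. pgl (\<alpha> (axis i 1)) (actl (axis a 1) (axis p 1)))"
  define U9 where "U9 = (\<lambda>i j k. pgl (\<alpha> (axis i 1)) (pf (axis j 1) (axis k 1)))"
  define W1 where "W1 = (\<lambda>a i j. ph (acth (axis a 1) (axis i 1)) (axis j 1))"
  define W2 where "W2 = (\<lambda>a i b j. ph (acth (axis a 1) (axis i 1)) (acth (axis b 1) (axis j 1)))"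
  define W3 where "W3 = (\<lambda>a i p. ph (acth (axis a 1) (axis i 1)) (\<beta> (axis p 1)))"
  define W4 where "W4 = (\<lambda>p j. ph (\<beta> (axis p 1)) (axis j 1))"
  define W5 where "W5 = (\<lambda>p a i. ph (\<beta> (axis p 1)) (acth (axis a 1) (axis i 1)))"
  define W6 where "W6 = (\<lambda>p q. ph (\<beta> (axis p 1)) (\<beta> (axis q 1)))"
  define dA where "dA = (\<lambda>i. d (A i))"
  define dB where "dB = (\<lambda>i. d (B i))"
  define dC where "dC = (\<lambda>i. d (C i))"
  have pair2_bi: "\<And>p X Y. pair2 wedge p X Y = bi wedge (\<lambda>a b. p (axis a 1) (axis b 1)) X Y"
    unfolding pair2_def bi_def by simp
  have cs: "CS5 wedge d brg \<alpha> \<beta> acth ph pgl A B C =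
     2 *\<^sub>R bi wedge P1 dA C + tri wedge T2 A A C - bi wedge P3 B C
     + (bi wedge Q B dB + tri wedge T5 B A B - bi wedge P6 B C)
     - d (bi wedge P1 A C)"
    unfolding CS5_def fake_curv_def curv2_def
    apply (simp add: pair2_lin pair2_ext1_left pair2_ext1_right bpgl bph b1 b2 b3 b4)
    apply (simp add: pair2_ext2_left pair2_ext2_right bpgl bph b1 b2 b3 b4)
    apply (simp add: pair2_bi P1_def T2_def P3_def Q_def T5_def P6_def dA_def dB_def scaleR_add_right)
    done
  have dA2': "vform hom 2 dA" and dB3': "vform hom 3 dB" and dC4': "vform hom 4 dC"
    using dA2 dB3 dC4 by (simp_all add: dA_def dB_def dC_def)
  have dVA: "dV d A = dA" and dVB: "dV d B = dB" and dVC: "dV d C = dC"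
    and dVdA: "dV d dA = (\<lambda>i. 0)" and dVdB: "dV d dB = (\<lambda>i. 0)"
    by (simp_all add: dV_def dA_def dB_def dC_def dd)
  have bzr: "\<And>t X. bi wedge t X (\<lambda>i. 0) = 0" by (simp add: bi_def Wzero_right)
  have L: "d (CS5 wedge d brg \<alpha> \<beta> acth ph pgl A B C) =
     2 *\<^sub>R bi wedge P1 dA dC + (tri wedge T2 dA A C - tri wedge T2 A dA C + tri wedge T2 A A dC)
     - (bi wedge P3 dB C + bi wedge P3 B dC)
     + (bi wedge Q dB dB + (tri wedge T5 dB A B + tri wedge T5 B dA B - tri wedge T5 B A dB)
     - (bi wedge P6 dB C + bi wedge P6 B dC))"
    unfolding cs
    by (simp add: dadd ddiff dscale dd bi_d[OF dA2'] bi_d[OF B2] tri_d[OF A1 A1] tri_d[OF B2 A1]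
        dVA dVB dVC dVdA dVdB bi_zero_left bzr)
  have R: "2 *\<^sub>R pair2 wedge pgl (curv1 wedge d brg \<alpha> A B) (curv3 wedge d actl pf A B C)
           + pair2 wedge ph (curv2 wedge d acth \<beta> A B C) (curv2 wedge d acth \<beta> A B C)
     = 2 *\<^sub>R (bi wedge P1 dA dC + tri wedge U2 dA A C + tri wedge U3 dA B B
         + (1/2) *\<^sub>R (tri wedge T2 A A dC + quad wedge V5 A A A C + quad wedge V6 A A B B)
         - (bi wedge P3 B dC + tri wedge U8 B A C + tri wedge U9 B B B))
       + (bi wedge Q dB dB + tri wedge T5 dB A B - bi wedge P6 dB C
         + (tri wedge W1 A B dB + quad wedge W2 A B A B - tri wedge W3 A B C)
         - (bi wedge W4 C dB + tri wedge W5 C A B - bi wedge W6 C C))"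
    unfolding curv1_def curv2_def curv3_def
    apply (simp add: pair2_lin pair2_ext1_left pair2_ext1_right pair2_ext2_both bpgl bph b1 b2 b3 b4)
    apply (simp add: pair2_ext2_left pair2_ext2_right bpgl bph b1 b2 b3 b4)
    apply (simp add: pair2_bi P1_def T2_def P3_def Q_def T5_def P6_def U2_def U3_def V5_def V6_def U8_def U9_def
       W1_def W2_def W3_def W4_def W5_def W6_def dA_def dB_def dC_def)
    done
  have bi_sc: "\<And>c t X Y. bi wedge (\<lambda>a b. c * t a b) X Y = c *\<^sub>R bi wedge t X Y"
    by (simp add: bi_def scaleR_sum_right)
  have tri_sc: "\<And>c t X Y Z. tri wedge (\<lambda>a b e. c * t a b e) X Y Z = c *\<^sub>R tri wedge t X Y Z"
    by (simp add: tri_def scaleR_sum_right)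
  have quad_sc: "\<And>c t X Y Z U. quad wedge (\<lambda>a b e f. c * t a b e f) X Y Z U = c *\<^sub>R quad wedge t X Y Z U"
    by (simp add: quad_def scaleR_sum_right)
  have ganti: "\<And>x y z. pgl (brg x y) z = - pgl (brg y x) z"
    using lie_anti[OF lg] bilinear_lneg[OF bpgl] by metis
  have hanti: "\<And>x y z. ph (brh x y) z = - ph (brh y x) z"
    using lie_anti[OF lh] bilinear_lneg[OF bph] by metis
  note lsub = bilinear_lsub[OF bph] bilinear_rsub[OF bph]
  have S1: "tri wedge T2 A dA C = tri wedge T2 dA A C - 2 *\<^sub>R tri wedge U2 dA A C"
  proof -
    have "tri wedge T2 A dA C = tri wedge (\<lambda>b a c. T2 a b c) dA A C"
      using tri_swap12[OF A1 dA2', of T2 C] by simp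
    also have "\<dots> = 1 *\<^sub>R tri wedge T2 dA A C + (-2) *\<^sub>R tri wedge U2 dA A C"
    proof (rule tri_comb[symmetric])
      fix a b c
      show "1 * T2 a b c + -2 * U2 a b c = T2 b a c"
        using pgl_br[of "axis a 1" "axis b 1" "axis c 1"] pgl_br[of "axis b 1" "axis a 1" "axis c 1"]
          ganti[of "axis a 1" "axis b 1" "axis c 1"]
        unfolding T2_def U2_def by linarith
    qed
    finally show ?thesis by simp
  qed
  have S2: "bi wedge W4 C dB = bi wedge P3 dB C"
  proof -
    have "bi wedge W4 C dB = - bi wedge (\<lambda>b a. W4 a b) dB C"
      using bi_swap[OF C3 dB3', of W4] by simp
    also have "bi wedge (\<lambda>b a. W4 a b) dB C = bi wedge (\<lambda>a b. (-1) * P3 a b) dB C"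
      by (rule bi_cong) (simp add: W4_def P3_def pgl_al)
    finally show ?thesis by (simp only: bi_sc; simp)
  qed
  have S3: "bi wedge P6 B dC = bi wedge P3 B dC"
    by (rule bi_cong) (simp add: P6_def P3_def pgl_al ph_anti[of "\<beta> _"])
  have S4: "tri wedge W1 A B dB = - tri wedge T5 B A dB"
  proof -
    have "tri wedge W1 A B dB = tri wedge (\<lambda>b a c. W1 a b c) B A dB"
      using tri_swap12[OF A1 B2, of W1 dB] by simp
    also have "\<dots> = tri wedge (\<lambda>a b c. (-1) * T5 a b c) B A dB"
    proof (rule tri_cong)
      fix a b c
      show "W1 b a c = -1 * T5 a b c"
        using ph_act[of "axis b 1" "axis a 1" "axis c 1"] unfolding W1_def T5_def by linarith
    qed
    finally show ?thesis by (simp only: tri_sc; simp)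
  qed
  have S5: "tri wedge T5 B dA B = 2 *\<^sub>R tri wedge U3 dA B B"
  proof -
    have "tri wedge T5 B dA B = tri wedge (\<lambda>b a c. T5 a b c) dA B B"
      using tri_swap12[OF B2 dA2', of T5 B] by simp
    also have "\<dots> = tri wedge (\<lambda>a b c. 2 * U3 a b c) dA B B"
    proof (rule tri_cong)
      fix a b c
      show "T5 b a c = 2 * U3 a b c"
        using ph_sym[of "axis c 1" "axis a 1" "axis b 1"] pgl_pf[of "axis a 1" "axis b 1" "axis c 1"]
        unfolding T5_def U3_def by linarith
    qed
    finally show ?thesis by (simp only: tri_sc; simp)
  qed
  have S6: "tri wedge W5 C A B = - (2 *\<^sub>R tri wedge U8 B A C + tri wedge W3 A B C)"
  proof -
    have r: "tri wedge W5 C A B = - tri wedge (\<lambda>b c a. W5 a b c) A B C"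
      using tri_rot[OF C3 A1 B2, of W5] by simp
    have s: "tri wedge U8 B A C = tri wedge (\<lambda>b a c. U8 a b c) A B C"
      using tri_swap12[OF B2 A1, of U8 C] by simp
    have "2 *\<^sub>R tri wedge (\<lambda>b a c. U8 a b c) A B C + 1 *\<^sub>R tri wedge W3 A B C = tri wedge (\<lambda>b c a. W5 a b c) A B C"
    proof (rule tri_comb)
      fix a b c
      show "2 * U8 b a c + 1 * W3 a b c = W5 c a b"
        using pgl_al[of "axis b 1" "actl (axis a 1) (axis c 1)", unfolded beact]
          ph_act[of "axis a 1" "\<beta> (axis c 1)" "axis b 1"] ph_anti[of "acth (axis a 1) (axis b 1)" "\<beta> (axis c 1)"]
        unfolding U8_def W3_def W5_def by linarith
    qed
    then show ?thesis using r s by simp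
  qed
  have self0: "\<And>(x::'w) c. x = c *\<^sub>R x \<Longrightarrow> c \<noteq> 1 \<Longrightarrow> x = 0"
  proof -
    fix x :: 'w and c :: real
    assume e: "x = c *\<^sub>R x" and c: "c \<noteq> 1"
    have "(1 - c) *\<^sub>R x = x - c *\<^sub>R x" by (simp add: scaleR_left_diff_distrib)
    also have "\<dots> = 0" using e by simp
    finally show "x = 0" using c by simp
  qed
  have S7: "tri wedge U9 B B B = 0"
  proof -
    define Sf where "Sf = (\<lambda>i j k. ph (acth (\<alpha> (axis i 1)) (axis j 1)) (axis k 1))"
    define u where "u = (\<lambda>i j k. ph (brh (axis j 1) (axis k 1)) (axis i 1))"
    define v where "v = (\<lambda>i j k. ph (brh (axis i 1) (axis j 1)) (axis k 1))"
    have a: "tri wedge U9 B B B = (-1/2) *\<^sub>R tri wedge Sf B B B"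
    proof -
      have "tri wedge U9 B B B = tri wedge (\<lambda>i j k. (-1/2) * Sf i j k) B B B"
      proof (rule tri_cong)
        fix i j k
        show "U9 i j k = (-1/2) * Sf i j k"
          using pgl_pf[of "\<alpha> (axis i 1)" "axis j 1" "axis k 1"]
            ph_anti[of "axis k 1" "acth (\<alpha> (axis i 1)) (axis j 1)"]
          unfolding U9_def Sf_def by linarith
      qed
      then show ?thesis by (simp only: tri_sc)
    qed
    have b: "tri wedge U9 B B B = (-1) *\<^sub>R tri wedge u B B B + 1 *\<^sub>R tri wedge (\<lambda>i j k. Sf j k i) B B B"
    proof (rule tri_comb[symmetric])
      fix i j k
      show "-1 * u i j k + 1 * Sf j k i = U9 i j k"
        using pgl_al[of "axis i 1" "pf (axis j 1) (axis k 1)", unfolded bepf lsub]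
        unfolding U9_def Sf_def u_def by linarith
    qed
    have c: "tri wedge (\<lambda>i j k. Sf j k i) B B B = tri wedge Sf B B B"
      using tri_rot[OF B2 B2 B2, of "\<lambda>i j k. Sf j k i"] by simp
    have d: "tri wedge u B B B = 0"
    proof -
      have v1: "tri wedge u B B B = tri wedge v B B B"
        using tri_rot[OF B2 B2 B2, of u] unfolding u_def v_def by simp
      have "tri wedge v B B B = tri wedge (\<lambda>b a c. v a b c) B B B"
        using tri_swap12[OF B2 B2, of v B] by simp
      also have "\<dots> = tri wedge (\<lambda>a b c. (-1) * v a b c) B B B"
      proof (rule tri_cong)
        fix a b c
        show "v b a c = -1 * v a b c" unfolding v_def using hanti[of "axis a 1" "axis b 1" "axis c 1"] by linarith
      qed
      finally have eq: "tri wedge v B B B = tri wedge (\<lambda>a b c. (-1) * v a b c) B B B" .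
      have "tri wedge v B B B = (-1) *\<^sub>R tri wedge v B B B"
        by (rule trans[OF eq tri_sc])
      then have "tri wedge v B B B = 0" by (rule self0) simp
      then show ?thesis using v1 by simp
    qed
    have e: "tri wedge U9 B B B = tri wedge Sf B B B" using b[unfolded c d] by simp
    have "tri wedge Sf B B B = (-1/2) *\<^sub>R tri wedge Sf B B B" by (rule trans[OF e[symmetric] a])
    then have "tri wedge Sf B B B = 0" by (rule self0) simp
    then show ?thesis using e by simp
  qed
  have S8: "quad wedge V5 A A A C = 0"
  proof -
    have r1: "quad wedge V5 A A A C = quad wedge (\<lambda>b c a e. V5 a b c e) A A A C"
      using quad_rot[OF A1 A1 A1, of V5 C] by simp
    have r2: "quad wedge (\<lambda>b c a e. V5 a b c e) A A A C = quad wedge (\<lambda>b c a e. V5 c a b e) A A A C"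
      using quad_rot[OF A1 A1 A1, of "\<lambda>b c a e. V5 a b c e" C] by simp
    have s1: "1 *\<^sub>R quad wedge V5 A A A C + 1 *\<^sub>R quad wedge (\<lambda>b c a e. V5 a b c e) A A A C
       = quad wedge (\<lambda>x y z p. 1 * V5 x y z p + 1 * V5 z x y p) A A A C"
      by (rule quad_comb) simp
    have s2: "1 *\<^sub>R quad wedge (\<lambda>x y z p. 1 * V5 x y z p + 1 * V5 z x y p) A A A C
       + 1 *\<^sub>R quad wedge (\<lambda>b c a e. V5 c a b e) A A A C = quad wedge (\<lambda>x y z p. 0) A A A C"
    proof (rule quad_comb)
      fix x y z p
      have j: "pgl (brg (axis x 1) (brg (axis y 1) (axis z 1)) + brg (axis y 1) (brg (axis z 1) (axis x 1))
          + brg (axis z 1) (brg (axis x 1) (axis y 1))) (axis p 1) = 0"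
        using jac by (simp add: bilinear_lzero[OF bpgl])
      show "1 * (1 * V5 x y z p + 1 * V5 z x y p) + 1 * V5 y z x p = 0"
        using j[unfolded bilinear_ladd[OF bpgl]]
          pgl_br[of "axis z 1" "brg (axis x 1) (axis y 1)" "axis p 1"]
          pgl_br[of "axis y 1" "brg (axis z 1) (axis x 1)" "axis p 1"]
          pgl_br[of "axis x 1" "brg (axis y 1) (axis z 1)" "axis p 1"]
        unfolding V5_def by (simp add: algebra_simps)
    qed
    have z: "quad wedge (\<lambda>x y z p. 0) A A A C = 0" by (rule quad_zero) simp
    have "quad wedge V5 A A A C + quad wedge V5 A A A C + quad wedge V5 A A A C
       = quad wedge V5 A A A C + quad wedge (\<lambda>b c a e. V5 a b c e) A A A C + quad wedge (\<lambda>b c a e. V5 c a b e) A A A C"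
      using r1 r2 by simp
    also have "\<dots> = quad wedge (\<lambda>x y z p. 1 * V5 x y z p + 1 * V5 z x y p) A A A C + quad wedge (\<lambda>b c a e. V5 c a b e) A A A C"
      using s1 by simp
    also have "\<dots> = 0" using s2 z by simp
    finally have q3: "quad wedge V5 A A A C + quad wedge V5 A A A C + quad wedge V5 A A A C = 0" .
    have "(3::real) *\<^sub>R quad wedge V5 A A A C = (2 + 1) *\<^sub>R quad wedge V5 A A A C" by simp
    also have "\<dots> = quad wedge V5 A A A C + quad wedge V5 A A A C + quad wedge V5 A A A C"
      by (simp only: scaleR_left_distrib scaleR_2 scaleR_one)
    finally have "(3::real) *\<^sub>R quad wedge V5 A A A C = 0" using q3 by simp
    then show ?thesis by simp
  qed
  have S9: "quad wedge W2 A B A B = - quad wedge V6 A A B B"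
  proof -
    define K where "K = (\<lambda>a b i j. ph (axis j 1) (acth (axis a 1) (acth (axis b 1) (axis i 1))))"
    have q0: "quad wedge W2 A B A B = quad wedge (\<lambda>a c b e. W2 a b c e) A A B B"
      using quad_swap23[OF B2 A1, of W2 A B] by simp
    have q1: "quad wedge (\<lambda>a c b e. W2 a b c e) A A B B = quad wedge (\<lambda>a b e c. W2 a c b e) A A B B"
      using quad_swap34[OF B2 B2, of "\<lambda>a c b e. W2 a b c e" A A] by simp
    have q2: "quad wedge (\<lambda>a b e c. W2 a c b e) A A B B = quad wedge (\<lambda>a b e c. (-1) * K a b e c) A A B B"
    proof (rule quad_cong)
      fix a b e c
      show "W2 a c b e = (-1) * K a b e c"
        using ph_act[of "axis a 1" "axis c 1" "acth (axis b 1) (axis e 1)"]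
        unfolding W2_def K_def by linarith
    qed
    have q3: "quad wedge (\<lambda>a b i j. K b a i j) A A B B = - quad wedge K A A B B"
      using quad_swap12[OF A1 A1, of "\<lambda>a b i j. K b a i j" B B] by simp
    have q4: "(1/2) *\<^sub>R quad wedge K A A B B + (-1/2) *\<^sub>R quad wedge (\<lambda>a b i j. K b a i j) A A B B
       = quad wedge V6 A A B B"
    proof (rule quad_comb)
      fix a b i j
      show "1/2 * K a b i j + -1/2 * K b a i j = V6 a b i j"
        using pgl_pf[of "brg (axis a 1) (axis b 1)" "axis i 1" "axis j 1", unfolded acthbr lsub]
        unfolding K_def V6_def by (simp add: algebra_simps)
    qed
    have h: "(1/2::real) *\<^sub>R quad wedge K A A B B + (1/2) *\<^sub>R quad wedge K A A B B = quad wedge K A A B B"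
      by (simp add: scaleR_left_distrib[symmetric])
    have "quad wedge V6 A A B B = quad wedge K A A B B"
      using q4[unfolded q3] h by simp
    moreover have "quad wedge W2 A B A B = - quad wedge K A A B B"
      using q0 q1 q2 by (simp only: quad_sc) simp
    ultimately show ?thesis by simp
  qed
  have S10: "bi wedge W6 C C = 0"
  proof (rule bi_zero)
    fix p q
    show "W6 p q = 0"
      using pgl_al[of "\<beta> (axis q 1)" "axis p 1"] by (simp add: W6_def ab0 bilinear_lzero[OF bpgl])
  qed
  show ?thesis
    by (simp only: L R S1 S2 S3 S4 S5 S6 S7 S8 S9 S10) (simp add: algebra_simps scaleR_2)
qed

end
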